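(* Let $a,b$ be even elements of a (graded, right) pre-Lie algebra and let $N\ge1$. Then $$[\cdots[[a,b],b],\dots,b]\ (N\text{ copies of }b)\;=\;\sum_{i=0}^{N}(-1)^i\binom{N}{i}\Big(\cdots\big((b^{[i]}\circ a)\circ b\big)\circ\cdots\Big)\circ b,$$ where in the $i$-th summand $b$ is applied on the right $N-i$ times, $b^{[i]}=(\cdots(b\circ b)\circ\cdots)\circ b$ ($i$ factors), and the $i=0$ term $b^{[0]}\circ a$ is to be read as $a$.
   Context: A (graded, right) pre-Lie algebra is a graded module with a product $\circ$ of degree $0$ such that $(x\circ y)\circ z-x\circ(y\circ z)$ is graded symmetric in $y,z$, and $[x,y]=x\circ y-(-1)^{|x||y|}y\circ x$. "Even" refers to this grading. *)

theory Defs
  imports Main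
begin

text \<open>A graded module is modelled as an abelian group 'a together with a family
  Hom :: int => 'a set of homogeneous components (subgroups); a graded
  (right) pre-Lie product is a biadditive operation pr of degree 0 whose
  associator is graded symmetric in its last two arguments.\<close>

definition sgn_smul :: "int \<Rightarrow> 'a::ab_group_add \<Rightarrow> 'a" where
  "sgn_smul k x = (if even k then x else - x)"

definition assoc :: "('a \<Rightarrow> 'a \<Rightarrow> 'a) \<Rightarrow> 'a \<Rightarrow> 'a \<Rightarrow> 'a \<Rightarrow> 'a::ab_group_add" where
  "assoc pr x y z = pr (pr x y) z - pr x (pr y z)"

definition graded_prelie :: "(int \<Rightarrow> 'a::ab_group_add set) \<Rightarrow> ('a \<Rightarrow> 'a \<Rightarrow> 'a) \<Rightarrow> bool" where
  "graded_prelie Hom pr \<longleftrightarrow>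
     (\<forall>n. 0 \<in> Hom n \<and> (\<forall>x\<in>Hom n. \<forall>y\<in>Hom n. x + y \<in> Hom n \<and> - x \<in> Hom n)) \<and>
     (\<forall>x y z. pr (x + y) z = pr x z + pr y z) \<and>
     (\<forall>x y z. pr x (y + z) = pr x y + pr x z) \<and>
     (\<forall>m n x y. x \<in> Hom m \<longrightarrow> y \<in> Hom n \<longrightarrow> pr x y \<in> Hom (m + n)) \<and>
     (\<forall>m n x y z. y \<in> Hom m \<longrightarrow> z \<in> Hom n \<longrightarrow>
        assoc pr x y z = sgn_smul (m * n) (assoc pr x z y))"

definition gbr :: "('a \<Rightarrow> 'a \<Rightarrow> 'a) \<Rightarrow> int \<Rightarrow> int \<Rightarrow> 'a \<Rightarrow> 'a \<Rightarrow> 'a::ab_group_add" where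
  "gbr pr m n x y = pr x y - sgn_smul (m * n) (pr y x)"

fun iter_br :: "('a \<Rightarrow> 'a \<Rightarrow> 'a) \<Rightarrow> int \<Rightarrow> int \<Rightarrow> 'a \<Rightarrow> 'a \<Rightarrow> nat \<Rightarrow> 'a::ab_group_add" where
  "iter_br pr p q a b 0 = a"
| "iter_br pr p q a b (Suc k) = gbr pr (p + int k * q) q (iter_br pr p q a b k) b"

fun rpow :: "('a \<Rightarrow> 'a \<Rightarrow> 'a) \<Rightarrow> 'a \<Rightarrow> nat \<Rightarrow> 'a" where
  "rpow pr b 0 = b"   \<comment> \<open>unused: b^[0] o a is read as a below\<close>
| "rpow pr b (Suc 0) = b"
| "rpow pr b (Suc (Suc i)) = pr (rpow pr b (Suc i)) b"

definition rmul_iter :: "('a \<Rightarrow> 'a \<Rightarrow> 'a) \<Rightarrow> 'a \<Rightarrow> nat \<Rightarrow> 'a \<Rightarrow> 'a" where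
  "rmul_iter pr b k x = ((\<lambda>y. pr y b) ^^ k) x"

definition nsmul :: "nat \<Rightarrow> 'a::ab_group_add \<Rightarrow> 'a" where
  "nsmul n x = (\<Sum>_<n. x)"

end

theory Submission
  imports Defs
begin

lemma nsmul_add: "nsmul (m + n) x = nsmul m x + (nsmul n x :: 'a::ab_group_add)"
  unfolding nsmul_def by (induct n) (auto simp: add.assoc)

lemma nsmul_0[simp]: "nsmul 0 x = (0::'a::ab_group_add)"
  unfolding nsmul_def by simp

lemma nsmul_1[simp]: "nsmul 1 x = (x::'a::ab_group_add)"
  unfolding nsmul_def by simp

lemma sgn_smul_0[simp]: "sgn_smul k (0::'a::ab_group_add) = 0"
  unfolding sgn_smul_def by simp

lemma sgn_smul_add: "sgn_smul k (x + y) = sgn_smul k x + (sgn_smul k y::'a::ab_group_add)"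
  unfolding sgn_smul_def by simp

lemma sgn_smul_Suc: "sgn_smul (int (Suc i)) x = - sgn_smul (int i) (x::'a::ab_group_add)"
  unfolding sgn_smul_def by simp

lemma hom_commute:
  fixes h :: "'a::ab_group_add \<Rightarrow> 'a"
  assumes h: "\<And>x y. h (x + y) = h x + h y"
  shows "h 0 = 0" "h (- x) = - h x" "h (nsmul n x) = nsmul n (h x)"
    "h (sgn_smul k x) = sgn_smul k (h x)" "h (sum g A) = sum (\<lambda>i. h (g i)) A"
proof -
  show h0: "h 0 = 0" using h[of 0 0] by simp
  show hn: "h (- x) = - h x" for x using h[of x "-x"] h0 by (simp add: eq_neg_iff_add_eq_0 add.commute)
  show "h (nsmul n x) = nsmul n (h x)"
    unfolding nsmul_def by (induct n) (auto simp: h h0)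
  show "h (sgn_smul k x) = sgn_smul k (h x)"
    unfolding sgn_smul_def by (simp add: hn)
  show "h (sum g A) = sum (\<lambda>i. h (g i)) A"
    using sum_comp_morphism[of h g A, OF h0 h] by (simp add: o_def)
qed

lemma lin_aux:
  fixes P Q R S X :: "'a::ab_group_add"
  assumes "Q - R = S - P" "X = R - P" shows "S + X = Q"
proof -
  have "S = Q - R + P" using assms(1) by (simp add: algebra_simps)
  then show ?thesis using assms(2) by simp
qed

definition Lam :: "('a \<Rightarrow> 'a \<Rightarrow> 'a) \<Rightarrow> 'a \<Rightarrow> nat \<Rightarrow> 'a \<Rightarrow> 'a" where
  "Lam pr b k x = (if k = 0 then x else pr (rpow pr b k) x)"

definition TT :: "('a \<Rightarrow> 'a \<Rightarrow> 'a) \<Rightarrow> 'a \<Rightarrow> 'a \<Rightarrow> nat \<Rightarrow> nat \<Rightarrow> 'a::ab_group_add" where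
  "TT pr a b j N = (\<Sum>i=0..N. sgn_smul (int i)
       (nsmul (N choose i) (rmul_iter pr b (N - i) (Lam pr b (i + j) a))))"

lemma rpow_Suc: "k \<ge> 1 \<Longrightarrow> rpow pr b (Suc k) = pr (rpow pr b k) b"
  by (cases k) auto

theorem lemma7p9:
  fixes Hom :: "int \<Rightarrow> 'a::ab_group_add set"
    and pr :: "'a \<Rightarrow> 'a \<Rightarrow> 'a"
    and a b :: 'a and p q :: int and N :: nat
  assumes "graded_prelie Hom pr"
    and "a \<in> Hom p" and "b \<in> Hom q" and "even p" and "even q"
    and "N \<ge> 1"
  shows "iter_br pr p q a b N =
    (\<Sum>i=0..N. sgn_smul (int i)
       (nsmul (N choose i)
         (rmul_iter pr b (N - i) (if i = 0 then a else pr (rpow pr b i) a))))"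
proof -
  note G = assms(1)[unfolded graded_prelie_def]
  have addL: "\<And>x y z. pr (x + y) z = pr x z + pr y z" using G by blast
  have addR: "\<And>x y z. pr x (y + z) = pr x y + pr x z" using G by blast
  have homadd: "\<And>n x y. x \<in> Hom n \<Longrightarrow> y \<in> Hom n \<Longrightarrow> x + y \<in> Hom n" using G by blast
  have homneg: "\<And>n x. x \<in> Hom n \<Longrightarrow> - x \<in> Hom n" using G by blast
  have hompr: "\<And>m n x y. x \<in> Hom m \<Longrightarrow> y \<in> Hom n \<Longrightarrow> pr x y \<in> Hom (m + n)" using G by blast
  have asy: "\<And>m n x y z. y \<in> Hom m \<Longrightarrow> z \<in> Hom n \<Longrightarrow>
        assoc pr x y z = sgn_smul (m * n) (assoc pr x z y)" using G by blast
  define rho where "rho = (\<lambda>y. pr y b)"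
  have rhoadd: "\<And>x y. rho (x + y) = rho x + rho y" unfolding rho_def by (rule addL)
  note rhoh = hom_commute[OF rhoadd]
  have praddR: "\<And>c. \<And>x y. pr c (x + y) = pr c x + pr c y" by (rule addR)
  note prh = hom_commute[OF praddR]
  have step: "iter_br pr p q a b (Suc k) = pr (iter_br pr p q a b k) b - pr b (iter_br pr p q a b k)" for k
    using assms(4,5) by (simp add: gbr_def sgn_smul_def)
  have hom: "iter_br pr p q a b k \<in> Hom (p + int k * q)" for k
  proof (induct k)
    case 0 then show ?case using assms(2) by simp
  next
    case (Suc k)
    have 1: "pr (iter_br pr p q a b k) b \<in> Hom (p + int (Suc k) * q)"
      using hompr[OF Suc assms(3)] by (simp add: algebra_simps)
    have 2: "pr b (iter_br pr p q a b k) \<in> Hom (p + int (Suc k) * q)"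
      using hompr[OF assms(3) Suc] by (simp add: algebra_simps)
    show ?case unfolding step using homadd[OF 1 homneg[OF 2]] by simp
  qed
  have key: "Lam pr b j (rho y - Lam pr b 1 y) = rho (Lam pr b j y) - Lam pr b (Suc j) y"
    if y: "y \<in> Hom m" "even m" for y m j
  proof (cases "j = 0")
    case True then show ?thesis by (simp add: Lam_def)
  next
    case False
    let ?c = "rpow pr b j"
    have "assoc pr ?c y b = sgn_smul (m * q) (assoc pr ?c b y)" by (rule asy[OF y(1) assms(3)])
    also have "\<dots> = assoc pr ?c b y" using y(2) by (simp add: sgn_smul_def)
    finally have "pr (pr ?c y) b - pr ?c (pr y b) = pr (pr ?c b) y - pr ?c (pr b y)"
      unfolding assoc_def .
    moreover have "pr ?c (pr y b - pr b y) = pr ?c (pr y b) - pr ?c (pr b y)"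
      using hom_commute(2)[OF addR[of ?c], of "pr b y"] addR[of ?c "pr y b" "- pr b y"] by simp
    ultimately have L: "pr (pr ?c b) y + pr ?c (pr y b - pr b y) = pr (pr ?c y) b"
      by (rule lin_aux)
    have "Lam pr b j (rho y - Lam pr b 1 y) = pr ?c (pr y b - pr b y)"
      using False by (simp add: Lam_def rho_def)
    also have "\<dots> = pr (pr ?c y) b - pr (pr ?c b) y"
      using L by (simp add: eq_diff_eq add.commute)
    also have "\<dots> = rho (Lam pr b j y) - Lam pr b (Suc j) y"
      using False rpow_Suc[of j pr b] by (simp add: Lam_def rho_def)
    finally show ?thesis .
  qed
  have rmul_Suc: "rho (rmul_iter pr b k x) = rmul_iter pr b (Suc k) x" for k x
    by (simp add: rmul_iter_def rho_def)
  have main: "Lam pr b j (iter_br pr p q a b N) = TT pr a b j N" for j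
  proof (induct N arbitrary: j)
    case 0 then show ?case by (simp add: TT_def rmul_iter_def sgn_smul_def nsmul_def)
  next
    case (Suc N)
    let ?f = "\<lambda>i. rmul_iter pr b (Suc N - i) (Lam pr b (i + j) a)"
    have e1: "iter_br pr p q a b (Suc N) = rho (iter_br pr p q a b N) - Lam pr b 1 (iter_br pr p q a b N)"
      unfolding step by (simp add: rho_def Lam_def)
    have ev: "even (p + int N * q)" using assms(4,5) by simp
    have "Lam pr b j (iter_br pr p q a b (Suc N)) = rho (TT pr a b j N) - TT pr a b (Suc j) N"
      unfolding e1 unfolding key[OF hom ev] unfolding Suc by simp
    also have "rho (TT pr a b j N) = (\<Sum>i=0..Suc N. sgn_smul (int i) (nsmul (N choose i) (?f i)))"
    proof -
      have "rho (TT pr a b j N) = (\<Sum>i=0..N. sgn_smul (int i) (nsmul (N choose i) (?f i)))"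
        unfolding TT_def rhoh(5) rhoh(4) rhoh(3) rmul_Suc
        by (rule sum.cong) (auto simp: Suc_diff_le)
      then show ?thesis by (simp add: binomial_eq_0)
    qed
    also have "TT pr a b (Suc j) N = - (\<Sum>i=0..Suc N. sgn_smul (int i) (nsmul (if i = 0 then 0 else N choose (i - 1)) (?f i)))"
    proof -
      have "(\<Sum>i=0..Suc N. sgn_smul (int i) (nsmul (if i = 0 then 0 else N choose (i - 1)) (?f i)))
          = (\<Sum>i=0..N. sgn_smul (int (Suc i)) (nsmul (N choose i) (?f (Suc i))))"
        by (subst sum.atLeast0_atMost_Suc_shift) (simp add: o_def)
      also have "\<dots> = - TT pr a b (Suc j) N"
        unfolding TT_def sgn_smul_Suc sum_negf by simp
      finally show ?thesis by simp
    qed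
    also have "(\<Sum>i=0..Suc N. sgn_smul (int i) (nsmul (N choose i) (?f i))) -
        - (\<Sum>i=0..Suc N. sgn_smul (int i) (nsmul (if i = 0 then 0 else N choose (i - 1)) (?f i)))
        = (\<Sum>i=0..Suc N. sgn_smul (int i) (nsmul (Suc N choose i) (?f i)))"
      unfolding diff_minus_eq_add sum.distrib[symmetric]
    proof (rule sum.cong)
      fix i assume "i \<in> {0..Suc N}"
      show "sgn_smul (int i) (nsmul (N choose i) (?f i)) +
         sgn_smul (int i) (nsmul (if i = 0 then 0 else N choose (i - 1)) (?f i)) =
         sgn_smul (int i) (nsmul (Suc N choose i) (?f i))"
        unfolding sgn_smul_add[symmetric] nsmul_add[symmetric]
        by (cases i) (auto simp: add.commute)
    qed simp
    finally show ?case unfolding TT_def by simp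
  qed
  show ?thesis using main[of 0] by (simp add: TT_def Lam_def)
qed

end
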